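(* Let $k\ge3$ be an integer and let $a>0$ and $\alpha>0$ be real numbers. W.h.p. over the choice of $\Phi=\Phi(k,n,\lfloor\alpha n\rfloor)$, for every set of clauses $Y$ with $|Y|\ge a\log n$, we have $|\mathrm{var}(Y)|\ge a\log n$.
   Context: The random $k$-CNF formula $\Phi(k,n,m)$ is uniform over $k$-CNF formulas with $n$ variables and $m$ clauses of $k$ literals each (repetitions allowed); w.h.p. means with probability $1-o(1)$ as $n\to\infty$. For a set of clauses $Y$, $\mathrm{var}(Y)$ is the set of variables appearing in some clause of $Y$. *)

theory Defs
  imports "HOL-Probability.Probability"
begin

text \<open>A literal is a pair (variable, sign) with variables from {0..<n}.  Repetitions are allowed.\<close>

type_synonym literal = "nat \<times> bool"
type_synonym clause = "nat \<Rightarrow> literal"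
type_synonym formula = "nat \<Rightarrow> clause"

definition kcnf_formulas :: "nat \<Rightarrow> nat \<Rightarrow> nat \<Rightarrow> formula set" where
  "kcnf_formulas k n m =
     PiE {0..<m} (\<lambda>_. PiE {0..<k} (\<lambda>_. {0..<n} \<times> (UNIV :: bool set)))"

definition random_kcnf :: "nat \<Rightarrow> nat \<Rightarrow> nat \<Rightarrow> formula pmf" where
  "random_kcnf k n m = pmf_of_set (kcnf_formulas k n m)"

definition var :: "nat \<Rightarrow> formula \<Rightarrow> nat set \<Rightarrow> nat set" where
  "var k \<Phi> Y = {fst (\<Phi> i j) | i j. i \<in> Y \<and> j < k}"

end

theory Submission
  imports Defs "HOL-Real_Asymp.Real_Asymp"
begin

definition CY :: "nat \<Rightarrow> nat \<Rightarrow> nat \<Rightarrow> nat set \<Rightarrow> nat set \<Rightarrow> formula set" where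
  "CY k n m Y T = PiE {0..<m} (\<lambda>i. PiE {0..<k} (\<lambda>j. (if i \<in> Y then T else {0..<n}) \<times> (UNIV::bool set)))"

lemma card_CY:
  assumes "Y \<subseteq> {0..<m}"
  shows "card (CY k n m Y T) = (2*card T)^(k*card Y) * (2*n)^(k*(m - card Y))"
proof -
  have fY: "finite Y" using assms finite_subset by blast
  have "card (CY k n m Y T) = (\<Prod>i\<in>{0..<m}. (2*card (if i\<in>Y then T else {0..<n}))^k)"
    unfolding CY_def by (simp add: card_PiE card_cartesian_product mult.commute)
  also have "\<dots> = (\<Prod>i\<in>{0..<m}. (if i\<in>Y then (2*card T)^k else (2*n)^k))"
    by (intro prod.cong) auto
  also have "\<dots> = (\<Prod>i\<in>Y. (2*card T)^k) * (\<Prod>i\<in>{0..<m}-Y. (2*n)^k)"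
  proof -
    have e1: "{0..<m} \<inter> Y = Y" "{0..<m} \<inter> - Y = {0..<m} - Y" using assms by auto
    show ?thesis by (subst prod.If_cases) (simp_all add: e1)
  qed
  also have "\<dots> = (2*card T)^(k*card Y) * (2*n)^(k*(m - card Y))"
    using assms fY by (simp add: power_mult card_Diff_subset)
  finally show ?thesis .
qed

lemma card_Omega: "card (kcnf_formulas k n m) = (2*n)^(k*m)"
  unfolding kcnf_formulas_def by (simp add: card_PiE card_cartesian_product power_mult mult.commute)

lemma CY_sub: "T \<subseteq> {0..<n} \<Longrightarrow> CY k n m Y T \<subseteq> kcnf_formulas k n m"
  unfolding CY_def kcnf_formulas_def
  by (rule PiE_mono, rule PiE_mono) auto

lemma finite_Omega: "finite (kcnf_formulas k n m)"
  unfolding kcnf_formulas_def by (intro finite_PiE) auto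

lemma var_sub: "\<Phi> \<in> kcnf_formulas k n m \<Longrightarrow> Y \<subseteq> {0..<m} \<Longrightarrow> var k \<Phi> Y \<subseteq> {0..<n}"
proof
  fix v assume A: "\<Phi> \<in> kcnf_formulas k n m" "Y \<subseteq> {0..<m}" "v \<in> var k \<Phi> Y"
  then obtain i j where ij: "v = fst (\<Phi> i j)" "i \<in> Y" "j < k" unfolding var_def by blast
  have "i < m" using ij A by auto
  hence "\<Phi> i \<in> PiE {0..<k} (\<lambda>_. {0..<n} \<times> (UNIV :: bool set))"
    using A(1) unfolding kcnf_formulas_def by (simp add: PiE_iff)
  hence "\<Phi> i j \<in> {0..<n} \<times> (UNIV :: bool set)" using ij by (simp add: PiE_iff)
  thus "v \<in> {0..<n}" using ij by (simp add: mem_Times_iff)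
qed

lemma var_mono: "Y \<subseteq> Y' \<Longrightarrow> var k \<Phi> Y \<subseteq> var k \<Phi> Y'"
  unfolding var_def by blast

lemma in_CY:
  assumes "\<Phi> \<in> kcnf_formulas k n m" "Y \<subseteq> {0..<m}" "var k \<Phi> Y \<subseteq> T"
  shows "\<Phi> \<in> CY k n m Y T"
  unfolding CY_def
proof (rule PiE_I)
  fix i assume "i \<notin> {0..<m}"
  thus "\<Phi> i = undefined" using assms(1) unfolding kcnf_formulas_def by (rule PiE_arb[rotated])
next
  fix i assume i: "i \<in> {0..<m}"
  have Pi: "\<Phi> i \<in> PiE {0..<k} (\<lambda>_. {0..<n} \<times> (UNIV :: bool set))"
    using assms(1) i unfolding kcnf_formulas_def by (rule PiE_mem)
  show "\<Phi> i \<in> PiE {0..<k} (\<lambda>j. (if i \<in> Y then T else {0..<n}) \<times> (UNIV::bool set))"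
  proof (rule PiE_I)
    fix j assume "j \<notin> {0..<k}"
    thus "\<Phi> i j = undefined" using Pi by (rule PiE_arb[rotated])
  next
    fix j assume j: "j \<in> {0..<k}"
    show "\<Phi> i j \<in> (if i \<in> Y then T else {0..<n}) \<times> (UNIV::bool set)"
    proof (cases "i \<in> Y")
      case True
      have "fst (\<Phi> i j) \<in> var k \<Phi> Y" unfolding var_def using True j by auto
      thus ?thesis using True assms(3) by (auto simp: mem_Times_iff)
    next
      case False
      thus ?thesis using PiE_mem[OF Pi j] by simp
    qed
  qed
qed

lemma bad_bound:
  assumes "n \<ge> 1" "s \<ge> 1" "s - 1 \<le> n"
  shows "measure_pmf.prob (random_kcnf k n m)
     {\<Phi>. \<exists>Y \<subseteq> {0..<m}. card Y \<ge> s \<and> card (var k \<Phi> Y) < s}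
     \<le> real (m choose s) * real (n choose (s-1)) * ((real s - 1) / real n)^(k * s)"
proof -
  define \<Omega> where "\<Omega> = kcnf_formulas k n m"
  define B where "B = {\<Phi>. \<exists>Y \<subseteq> {0..<m}. card Y \<ge> s \<and> card (var k \<Phi> Y) < s}"
  define Ys where "Ys = {Y. Y \<subseteq> {0..<m} \<and> card Y = s}"
  define Ts where "Ts = {T. T \<subseteq> {0..<n} \<and> card T = s - 1}"
  have fO: "finite \<Omega>" unfolding \<Omega>_def by (rule finite_Omega)
  have fYs: "finite Ys" unfolding Ys_def by (rule finite_subset[of _ "Pow {0..<m}"]) auto
  have fTs: "finite Ts" unfolding Ts_def by (rule finite_subset[of _ "Pow {0..<n}"]) auto
  have cO: "card \<Omega> = (2*n)^(k*m)" unfolding \<Omega>_def by (rule card_Omega)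
  have cO0: "card \<Omega> > 0" using cO assms by simp
  have sub: "\<Omega> \<inter> B \<subseteq> (\<Union>Y\<in>Ys. \<Union>T\<in>Ts. CY k n m Y T)"
  proof
    fix \<Phi> assume "\<Phi> \<in> \<Omega> \<inter> B"
    then obtain Y0 where P: "\<Phi> \<in> \<Omega>" "Y0 \<subseteq> {0..<m}" "card Y0 \<ge> s" "card (var k \<Phi> Y0) < s"
      unfolding B_def by auto
    obtain Y where Y: "Y \<subseteq> Y0" "card Y = s" "finite Y" using obtain_subset_with_card_n[OF P(3)] by metis
    have Ym: "Y \<subseteq> {0..<m}" using Y P by auto
    have vs: "var k \<Phi> Y \<subseteq> {0..<n}" using var_sub P(1) Ym unfolding \<Omega>_def by blast
    have vs0: "var k \<Phi> Y0 \<subseteq> {0..<n}" using var_sub P(1,2) unfolding \<Omega>_def by blast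
    have fv: "finite (var k \<Phi> Y)" using vs finite_subset by blast
    have "card (var k \<Phi> Y) \<le> card (var k \<Phi> Y0)"
      using var_mono[OF Y(1)] vs0 by (intro card_mono) (auto intro: finite_subset)
    hence cv: "card (var k \<Phi> Y) \<le> s - 1" using P(4) by linarith
    have "s - 1 - card (var k \<Phi> Y) \<le> card ({0..<n} - var k \<Phi> Y)"
      using vs cv assms by (simp add: card_Diff_subset fv)
    then obtain E where E: "E \<subseteq> {0..<n} - var k \<Phi> Y" "card E = s - 1 - card (var k \<Phi> Y)" "finite E"
      using obtain_subset_with_card_n by metis
    define T where "T = var k \<Phi> Y \<union> E"
    have "card T = card (var k \<Phi> Y) + card E" unfolding T_def using E fv
      by (subst card_Un_disjoint) auto
    hence "card T = s - 1" using E cv by simp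
    hence "T \<in> Ts" unfolding Ts_def T_def using vs E by auto
    moreover have "Y \<in> Ys" unfolding Ys_def using Ym Y by auto
    moreover have "\<Phi> \<in> CY k n m Y T" using in_CY[of \<Phi> k n m Y T] P(1) Ym unfolding \<Omega>_def T_def by auto
    ultimately show "\<Phi> \<in> (\<Union>Y\<in>Ys. \<Union>T\<in>Ts. CY k n m Y T)" by blast
  qed
  have fU: "finite (\<Union>Y\<in>Ys. \<Union>T\<in>Ts. CY k n m Y T)"
    by (rule finite_subset[OF _ fO]) (unfold Ts_def \<Omega>_def, use CY_sub in blast)
  have "card (\<Omega> \<inter> B) \<le> card (\<Union>Y\<in>Ys. \<Union>T\<in>Ts. CY k n m Y T)"
    by (rule card_mono[OF fU sub])
  also have "\<dots> \<le> (\<Sum>Y\<in>Ys. card (\<Union>T\<in>Ts. CY k n m Y T))" by (rule card_UN_le[OF fYs])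
  also have "\<dots> \<le> (\<Sum>Y\<in>Ys. \<Sum>T\<in>Ts. card (CY k n m Y T))"
    by (intro sum_mono card_UN_le[OF fTs])
  also have "\<dots> = (\<Sum>Y\<in>Ys. \<Sum>T\<in>Ts. (2*(s-1))^(k * s) * (2*n)^(k * (m - s)))"
    by (intro sum.cong refl) (simp add: card_CY Ys_def Ts_def)
  also have "\<dots> = card Ys * card Ts * ((2*(s-1))^(k * s) * (2*n)^(k * (m - s)))" by simp
  also have "card Ys = m choose s" unfolding Ys_def using n_subsets[of "{0..<m}" s] by simp
  also have "card Ts = n choose (s-1)" unfolding Ts_def using n_subsets[of "{0..<n}" "s-1"] by simp
  finally have cB: "card (\<Omega> \<inter> B) \<le> (m choose s) * (n choose (s-1)) * ((2*(s-1))^(k * s) * (2*n)^(k * (m - s)))" .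
  have "measure_pmf.prob (random_kcnf k n m) B = card (\<Omega> \<inter> B) / card \<Omega>"
    unfolding random_kcnf_def \<Omega>_def
    by (rule measure_pmf_of_set) (use fO cO0 in \<open>auto simp: \<Omega>_def\<close>)
  also have "\<dots> \<le> real ((m choose s) * (n choose (s-1)) * ((2*(s-1))^(k * s) * (2*n)^(k * (m - s)))) / card \<Omega>"
    by (intro divide_right_mono of_nat_mono[OF cB]) simp
  also have "\<dots> \<le> real (m choose s) * real (n choose (s-1)) * ((real s - 1) / real n)^(k * s)"
  proof (cases "s \<le> m")
    case True
    have e: "real ((2*n)^(k*m)) = real ((2*n)^(k * s)) * real ((2*n)^(k*(m-s)))"
    proof -
      have "k*m = k * s + k*(m-s)" using True by (simp add: diff_mult_distrib2)
      hence "(2*n)^(k*m) = (2*n)^(k * s) * (2*n)^(k*(m-s))" by (metis power_add)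
      thus ?thesis by (metis of_nat_mult)
    qed
    have e2: "real ((2*(s-1))^(k * s)) / real ((2*n)^(k * s)) = ((real s - 1) / real n)^(k * s)"
      using assms by (simp add: power_divide[symmetric] of_nat_diff)
    show ?thesis using assms unfolding cO e
      by (simp add: e2[symmetric])
  next
    case False
    then show ?thesis by (simp add: binomial_eq_0)
  qed
  finally show ?thesis unfolding B_def .
qed

lemma choose_le_pow': "n choose r \<le> n ^ r"
  by (cases "r \<le> n") (auto simp: binomial_le_pow binomial_eq_0)

lemma ceil_iff: "0 \<le> c \<Longrightarrow> (c \<le> real x) = (nat \<lceil>c\<rceil> \<le> x)"
  by (simp add: nat_le_iff ceiling_le_iff)

lemma final_bound:
  fixes n m s k :: nat and \<alpha> :: real
  assumes "n \<ge> 1" "s \<ge> 1" "s \<le> n" "k \<ge> 3" "real m \<le> \<alpha> * n" "\<alpha> * real s ^ 3 / n \<le> 1" "\<alpha> \<ge> 0"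
  shows "real (m choose s) * real (n choose (s-1)) * ((real s - 1) / real n) ^ (k * s) \<le> 1 / real n"
proof -
  have n0: "real n > 0" using assms by simp
  have r01: "0 \<le> real s / n" "real s / n \<le> 1" using assms by auto
  have "real (m choose s) * real (n choose (s-1)) * ((real s - 1) / real n) ^ (k * s)
        \<le> real m ^ s * real n ^ (s - 1) * (real s / real n) ^ (k * s)"
  proof (intro mult_mono)
    show "real (m choose s) \<le> real m ^ s" by (metis choose_le_pow' of_nat_le_iff of_nat_power)
    show "real (n choose (s-1)) \<le> real n ^ (s - 1)" by (metis choose_le_pow' of_nat_le_iff of_nat_power)
    show "((real s - 1) / real n) ^ (k * s) \<le> (real s / real n) ^ (k * s)"
      using assms n0 by (intro power_mono divide_right_mono) auto
  qed (use assms in auto)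
  also have "\<dots> \<le> (\<alpha> * n) ^ s * real n ^ (s - 1) * (real s / real n) ^ (3 * s)"
  proof (intro mult_mono)
    show "real m ^ s \<le> (\<alpha> * n) ^ s" using assms by (intro power_mono) auto
    show "(real s / real n) ^ (k * s) \<le> (real s / real n) ^ (3 * s)"
      using r01 assms by (intro power_decreasing) auto
  qed (use assms in auto)
  also have "\<dots> = (\<alpha> * real s ^ 3 / n) ^ s / n"
  proof -
    obtain t where t: "s = Suc t" using assms(2) by (cases s) auto
    have e1: "real n ^ (s - 1) = real n ^ s / n" using n0 unfolding t by simp
    have e2: "(real s / real n) ^ (3 * s) = ((real s / real n) ^ 3) ^ s" by (simp add: power_mult)
    have e3: "(\<alpha> * n) * n * (real s / real n) ^ 3 = \<alpha> * real s ^ 3 / n"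
      using n0 by (simp add: power3_eq_cube field_simps)
    have "(\<alpha> * n) ^ s * (real n ^ s / n) * ((real s / real n) ^ 3) ^ s
        = ((\<alpha> * n) ^ s * real n ^ s * ((real s / real n) ^ 3) ^ s) / n" by simp
    also have "\<dots> = ((\<alpha> * n) * n * (real s / real n) ^ 3) ^ s / n"
      by (simp only: power_mult_distrib)
    finally show ?thesis unfolding e1 e2 e3 .
  qed
  also have "\<dots> \<le> 1 / n"
    using assms n0 by (intro divide_right_mono power_le_one) auto
  finally show ?thesis .
qed

theorem lemma6p2:
  fixes k :: nat and a \<alpha> :: real
  assumes "k \<ge> 3" and "a > 0" and "\<alpha> > 0"
  shows "(\<lambda>n. measure_pmf.prob (random_kcnf k n (nat \<lfloor>\<alpha> * real n\<rfloor>))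
            {\<Phi>. \<forall>Y \<subseteq> {0..<nat \<lfloor>\<alpha> * real n\<rfloor>}.
                   real (card Y) \<ge> a * ln (real n) \<longrightarrow>
                   real (card (var k \<Phi> Y)) \<ge> a * ln (real n)})
         \<longlonglongrightarrow> 1"
proof -
  define P where "P = (\<lambda>n. measure_pmf.prob (random_kcnf k n (nat \<lfloor>\<alpha> * real n\<rfloor>))
            {\<Phi>. \<forall>Y \<subseteq> {0..<nat \<lfloor>\<alpha> * real n\<rfloor>}.
                   real (card Y) \<ge> a * ln (real n) \<longrightarrow>
                   real (card (var k \<Phi> Y)) \<ge> a * ln (real n)})"
  have ev1: "eventually (\<lambda>n::nat. a * ln (real n) + 1 \<le> real n) sequentially"
    using assms by real_asymp
  have lim2: "((\<lambda>n::nat. \<alpha> * (a * ln (real n) + 1) ^ 3 / real n) \<longlongrightarrow> 0) sequentially"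
    using assms by real_asymp
  have ev2: "eventually (\<lambda>n::nat. \<alpha> * (a * ln (real n) + 1) ^ 3 / real n < 1) sequentially"
    using order_tendstoD(2)[OF lim2] by simp
  have ev3: "eventually (\<lambda>n::nat. n \<ge> 2) sequentially" by (rule eventually_ge_at_top)
  have evb: "eventually (\<lambda>n. 1 - 1 / real n \<le> P n) sequentially"
    using ev1 ev2 ev3
  proof eventually_elim
    case (elim n)
    define m where "m = nat \<lfloor>\<alpha> * real n\<rfloor>"
    define c where "c = a * ln (real n)"
    define s where "s = nat \<lceil>c\<rceil>"
    have c0: "c > 0" unfolding c_def using elim assms by simp
    have s1: "s \<ge> 1" unfolding s_def using c0 by linarith
    have sle: "real s \<le> c + 1" unfolding s_def using c0 by linarith
    have sn: "s \<le> n" using sle elim(1) unfolding c_def by linarith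
    have mle: "real m \<le> \<alpha> * n" unfolding m_def using assms by simp
    have "\<alpha> * real s ^ 3 / n \<le> \<alpha> * (c + 1) ^ 3 / n"
      using assms sle by (intro divide_right_mono mult_left_mono power_mono) auto
    hence as3: "\<alpha> * real s ^ 3 / n \<le> 1" using elim(2) unfolding c_def by linarith
    define B where "B = {\<Phi>. \<exists>Y \<subseteq> {0..<m}. card Y \<ge> s \<and> card (var k \<Phi> Y) < s}"
    have G: "{\<Phi>. \<forall>Y \<subseteq> {0..<m}. real (card Y) \<ge> c \<longrightarrow> real (card (var k \<Phi> Y)) \<ge> c}
             = UNIV - B"
    proof -
      have ci: "\<And>x::nat. (c \<le> real x) = (s \<le> x)" unfolding s_def using ceil_iff[of c] c0 by simp
      show ?thesis unfolding B_def ci by (auto simp: not_le)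
    qed
    have "P n = measure_pmf.prob (random_kcnf k n m) (UNIV - B)"
      unfolding P_def using G unfolding m_def c_def by simp
    also have "\<dots> = 1 - measure_pmf.prob (random_kcnf k n m) B"
      using measure_pmf.prob_compl[of B "random_kcnf k n m"] by simp
    finally have "P n = 1 - measure_pmf.prob (random_kcnf k n m) B" .
    moreover have "measure_pmf.prob (random_kcnf k n m) B \<le> 1 / real n"
      using bad_bound[of n s k m] final_bound[of n s k m \<alpha>] elim s1 sn mle as3 assms less_imp_le[OF assms(3)]
      unfolding B_def by fastforce
    ultimately show ?case by simp
  qed
  have evc: "eventually (\<lambda>n. P n \<le> 1) sequentially"
    by (simp add: P_def)
  have "(\<lambda>n. 1 - 1 / real n) \<longlonglongrightarrow> (1::real)" by real_asymp
  hence "P \<longlonglongrightarrow> 1" using tendsto_sandwich[OF evb evc] by simp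
  thus ?thesis unfolding P_def .
qed

end
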